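(* Let $X$ be a Baire space, $Y$ a topological space, $(Z,d)$ a metric space and $f:X\times Y\to Z$ a mapping. Suppose that each $y\in Y$ has a neighborhood with a countable pseudobase, and that one of the following holds: (i) for each $x\in X$, $f_x$ is quasicontinuous and there is a dense set $D_x\subset Y$ such that $f^y$ is quasicontinuous at $x$ for every $y\in D_x$; (ii) for each $y\in Y$, $f^y$ is quasicontinuous and there is a dense Baire subspace $Q_y\subset X$ such that $f_x$ is quasicontinuous at $y$ for every $x\in Q_y$. Then $f$ is quasicontinuous (as a mapping on $X\times Y$ with the product topology).
   Context: $f_x(y)=f^y(x)=f(x,y)$. A mapping $g:T\to Z$ is quasicontinuous at $t$ if for each neighborhood $U$ of $t$ and each neighborhood $W$ of $g(t)$ there is an open $O$ with $\emptyset\ne O\subset U$ and $g(O)\subset W$; quasicontinuous means at every point. A pseudobase of a space is a collection of nonempty open sets such that every nonempty open set contains one of them. *)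

theory Defs
  imports "HOL-Analysis.Analysis"
begin

definition Baire_space :: "'a topology \<Rightarrow> bool" where
  "Baire_space T \<longleftrightarrow>
     (\<forall>\<G>. countable \<G> \<and> (\<forall>G\<in>\<G>. openin T G \<and> T closure_of G = topspace T)
        \<longrightarrow> T closure_of (topspace T \<inter> \<Inter>\<G>) = topspace T)"

definition quasicontinuous_at :: "'a topology \<Rightarrow> ('a \<Rightarrow> 'c::metric_space) \<Rightarrow> 'a \<Rightarrow> bool" where
  "quasicontinuous_at T g t \<longleftrightarrow>
     (\<forall>U W. openin T U \<and> t \<in> U \<and> open W \<and> g t \<in> W \<longrightarrow>
        (\<exists>V. openin T V \<and> V \<noteq> {} \<and> V \<subseteq> U \<and> g ` V \<subseteq> W))"

definition quasicontinuous :: "'a topology \<Rightarrow> ('a \<Rightarrow> 'c::metric_space) \<Rightarrow> bool" where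
  "quasicontinuous T g \<longleftrightarrow> (\<forall>t\<in>topspace T. quasicontinuous_at T g t)"

definition pseudobase :: "'a topology \<Rightarrow> 'a set set \<Rightarrow> bool" where
  "pseudobase T \<P> \<longleftrightarrow>
     (\<forall>P\<in>\<P>. openin T P \<and> P \<noteq> {}) \<and>
     (\<forall>U. openin T U \<and> U \<noteq> {} \<longrightarrow> (\<exists>P\<in>\<P>. P \<subseteq> U))"

end

theory Submission
  imports Defs
begin


lemma open_meets: "openin T W \<Longrightarrow> W \<noteq> {} \<Longrightarrow> W \<subseteq> T closure_of S \<Longrightarrow> W \<inter> S \<noteq> {}"
  using openin_Int_closure_of_eq_empty[of T W S] by blast

lemma dense_meets: "T closure_of S = topspace T \<Longrightarrow> openin T W \<Longrightarrow> W \<noteq> {} \<Longrightarrow> W \<inter> S \<noteq> {}"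
  using dense_intersects_open[of T S] by blast

lemma baire_meet:
  assumes B: "Baire_space T" and c: "countable \<P>" and U0: "openin T U0" "U0 \<noteq> {}"
    and cov: "U0 \<subseteq> (\<Union>P\<in>\<P>. A P)"
  shows "\<exists>P\<in>\<P>. \<exists>Ub. openin T Ub \<and> Ub \<noteq> {} \<and> Ub \<subseteq> U0 \<and>
           (\<forall>W. openin T W \<and> W \<noteq> {} \<and> W \<subseteq> Ub \<longrightarrow> W \<inter> A P \<noteq> {})"
proof (rule ccontr)
  assume neg: "\<not> ?thesis"
  define G where "G P = topspace T - (T closure_of (A P) \<inter> T closure_of U0)" for P
  have Gopen: "openin T (G P)" for P
    unfolding G_def by (intro openin_diff openin_topspace closedin_Int closedin_closure_of)
  have Gdense: "T closure_of (G P) = topspace T" if P: "P \<in> \<P>" for P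
    unfolding dense_intersects_open
  proof (intro allI impI)
    fix W assume W: "openin T W \<and> W \<noteq> {}"
    show "G P \<inter> W \<noteq> {}"
    proof
      assume disj: "G P \<inter> W = {}"
      have Wsub: "W \<subseteq> T closure_of (A P) \<and> W \<subseteq> T closure_of U0"
        using disj W openin_subset[of T W] unfolding G_def by blast
      have "W \<inter> U0 \<noteq> {}" using open_meets[of T W U0] W Wsub by blast
      then obtain W' where W': "openin T W'" "W' \<noteq> {}" "W' \<subseteq> W \<inter> U0" "W' \<inter> A P = {}"
        using neg P W U0(1) by (metis inf_le2 openin_Int)
      then show False using open_meets[of T W' "A P"] Wsub by blast
    qed
  qed
  have "T closure_of (topspace T \<inter> \<Inter>(G ` \<P>)) = topspace T"
    using B c Gopen Gdense unfolding Baire_space_def by (auto)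
  then obtain x where x: "x \<in> U0" "x \<in> topspace T" "\<forall>P\<in>\<P>. x \<in> G P"
    using dense_meets[OF _ U0] by blast
  then obtain P where P: "P \<in> \<P>" "x \<in> A P" using cov by blast
  have "x \<in> T closure_of (A P)" using x P by (meson in_closure_of)
  moreover have "x \<in> T closure_of U0" using x by (meson in_closure_of)
  ultimately show False using x P unfolding G_def by blast
qed

lemma qc_box:
  fixes f :: "'a \<times> 'b \<Rightarrow> 'c::metric_space"
  assumes H: "\<And>UX VY e. openin X UX \<Longrightarrow> openin Y VY \<Longrightarrow> x0 \<in> UX \<Longrightarrow> y0 \<in> VY \<Longrightarrow> e > 0 \<Longrightarrow>
     (\<exists>G H. openin X G \<and> G \<noteq> {} \<and> G \<subseteq> UX \<and> openin Y H \<and> H \<noteq> {} \<and> H \<subseteq> VY \<and>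
        (\<forall>x\<in>G. \<forall>y\<in>H. dist (f (x,y)) (f (x0,y0)) < e))"
  shows "quasicontinuous_at (prod_topology X Y) f (x0,y0)"
  unfolding quasicontinuous_at_def
proof (intro allI impI)
  fix U W assume UW: "openin (prod_topology X Y) U \<and> (x0, y0) \<in> U \<and> open W \<and> f (x0, y0) \<in> W"
  then obtain UX VY where B: "openin X UX" "openin Y VY" "x0 \<in> UX" "y0 \<in> VY" "UX \<times> VY \<subseteq> U"
    using openin_prod_topology_alt[of X Y U] by meson
  obtain e where e: "e > 0" "ball (f (x0,y0)) e \<subseteq> W" using UW open_contains_ball[of W] by meson
  obtain G H where GH: "openin X G" "G \<noteq> {}" "G \<subseteq> UX" "openin Y H" "H \<noteq> {}" "H \<subseteq> VY"
     "\<forall>x\<in>G. \<forall>y\<in>H. dist (f (x,y)) (f (x0,y0)) < e" using H[OF B(1-4) e(1)] by blast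
  show "\<exists>V. openin (prod_topology X Y) V \<and> V \<noteq> {} \<and> V \<subseteq> U \<and> f ` V \<subseteq> W"
  proof (intro exI conjI)
    show "openin (prod_topology X Y) (G \<times> H)" using GH by (simp add: openin_prod_Times_iff)
    show "G \<times> H \<noteq> {}" using GH by blast
    show "G \<times> H \<subseteq> U" using GH B by blast
    show "f ` (G \<times> H) \<subseteq> W" proof
      fix z assume "z \<in> f ` (G \<times> H)"
      then obtain x y where "x \<in> G" "y \<in> H" "z = f (x,y)" by blast
      then have "dist (f (x0,y0)) z < e" using GH(7) by (metis dist_commute)
      then show "z \<in> W" using e by auto
    qed
  qed
qed

lemma pb_open:
  assumes "openin (subtopology Y N) P" "P \<subseteq> V" "openin Y V" "V \<subseteq> N"
  shows "openin Y P"
proof -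
  have "\<exists>T. openin Y T \<and> P = T \<inter> N" using assms(1) by (simp add: openin_subtopology)
  then obtain T where T: "openin Y T" "P = T \<inter> N" by blast
  have "P = T \<inter> V" using T(2) assms(2,4) by blast
  moreover have "openin Y (T \<inter> V)" using T(1) assms(3) by (rule openin_Int)
  ultimately show ?thesis by simp
qed

lemma pb_sub:
  assumes "openin Y V'" "V' \<subseteq> N"
  shows "openin (subtopology Y N) V'"
proof -
  have "openin (subtopology Y N) (V' \<inter> N)" by (rule openin_subtopology_Int[OF assms(1)])
  moreover have "V' \<inter> N = V'" using assms(2) by blast
  ultimately show ?thesis by simp
qed

lemma qc_get:
  fixes g :: "'a \<Rightarrow> 'c::metric_space"
  assumes "quasicontinuous_at T g t" "openin T U" "t \<in> U" "r > 0"
  shows "\<exists>V. openin T V \<and> V \<noteq> {} \<and> V \<subseteq> U \<and> (\<forall>v\<in>V. dist (g v) (g t) < r)"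
proof -
  have "g t \<in> ball (g t) r" using assms(4) by simp
  then obtain V where V: "openin T V" "V \<noteq> {}" "V \<subseteq> U" "g ` V \<subseteq> ball (g t) r"
    using assms(1-3) unfolding quasicontinuous_at_def by (meson open_ball)
  have "\<forall>v\<in>V. dist (g v) (g t) < r"
  proof
    fix v assume "v \<in> V" then have "g v \<in> ball (g t) r" using V by blast
    then show "dist (g v) (g t) < r" by (simp add: dist_commute)
  qed
  then show ?thesis using V by blast
qed

lemma case2:
  fixes f :: "'a \<times> 'b \<Rightarrow> 'c::metric_space"
  assumes qx: "\<forall>y\<in>topspace Y. quasicontinuous X (\<lambda>x. f (x, y))"
    and Qs: "Q \<subseteq> topspace X" and Qd: "X closure_of Q = topspace X"
    and QB: "Baire_space (subtopology X Q)"
    and Qq: "\<forall>x\<in>Q. quasicontinuous_at Y (\<lambda>y'. f (x, y')) y0"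
    and V0: "openin Y V0" "y0 \<in> V0" "V0 \<subseteq> N" "N \<subseteq> topspace Y"
    and Pc: "countable \<P>" and Pb: "pseudobase (subtopology Y N) \<P>"
    and x0: "x0 \<in> topspace X" and y0: "y0 \<in> topspace Y"
    and UX: "openin X UX" "x0 \<in> UX" and VY: "openin Y VY" "y0 \<in> VY" and e: "e > 0"
  shows "\<exists>G H. openin X G \<and> G \<noteq> {} \<and> G \<subseteq> UX \<and> openin Y H \<and> H \<noteq> {} \<and> H \<subseteq> VY \<and>
        (\<forall>x\<in>G. \<forall>y\<in>H. dist (f (x,y)) (f (x0,y0)) < e)"
proof -
  define c where "c = f (x0,y0)"
  define VV where "VV = VY \<inter> V0"
  have VV: "openin Y VV" "y0 \<in> VV" "VV \<subseteq> N" using VY V0 unfolding VV_def by auto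
  have "quasicontinuous_at X (\<lambda>x. f (x, y0)) x0" using qx y0 x0 unfolding quasicontinuous_def by blast
  note qq = this
  have "\<exists>V. openin X V \<and> V \<noteq> {} \<and> V \<subseteq> UX \<and> (\<forall>x\<in>V. dist (f (x, y0)) c < e/4)"
    unfolding c_def by (rule qc_get[OF qq]) (use UX e in auto)
  then obtain U1 where U1: "openin X U1" "U1 \<noteq> {}" "U1 \<subseteq> UX" "\<forall>x\<in>U1. dist (f (x, y0)) c < e/4"
    by blast
  define A where "A P = {x \<in> U1 \<inter> Q. P \<subseteq> VV \<and> (\<forall>y\<in>P. dist (f (x,y)) c < e/2)}" for P
  have cov: "U1 \<inter> Q \<subseteq> (\<Union>P\<in>\<P>. A P)"
  proof
    fix x assume x: "x \<in> U1 \<inter> Q"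
    have "quasicontinuous_at Y (\<lambda>y'. f (x, y')) y0" using Qq x by blast
    note qq = this
    have "\<exists>V. openin Y V \<and> V \<noteq> {} \<and> V \<subseteq> VV \<and> (\<forall>y\<in>V. dist (f (x, y)) (f (x,y0)) < e/4)"
      by (rule qc_get[OF qq]) (use VV e in auto)
    then obtain V' where V': "openin Y V'" "V' \<noteq> {}" "V' \<subseteq> VV" "\<forall>y\<in>V'. dist (f (x, y)) (f (x,y0)) < e/4"
      by blast
    have "openin (subtopology Y N) V'" using pb_sub[OF V'(1)] V' VV by blast
    then obtain P where P: "P \<in> \<P>" "P \<subseteq> V'" using Pb V' unfolding pseudobase_def by blast
    have "\<forall>y\<in>P. dist (f (x,y)) c < e/2"
    proof
      fix y assume "y \<in> P"
      then have "dist (f (x,y)) (f (x,y0)) < e/4" using P V' by blast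
      moreover have "dist (f (x,y0)) c < e/4" using U1 x by blast
      ultimately show "dist (f (x,y)) c < e/2" using dist_triangle[of "f(x,y)" c "f(x,y0)"]
        by linarith
    qed
    then show "x \<in> (\<Union>P\<in>\<P>. A P)" using P V' x unfolding A_def by blast
  qed
  have U1Q: "openin (subtopology X Q) (U1 \<inter> Q)" by (rule openin_subtopology_Int[OF U1(1)])
  have U1Qne: "U1 \<inter> Q \<noteq> {}" using dense_meets[OF Qd U1(1,2)] by blast
  obtain P O2 where P: "P \<in> \<P>" and O2: "openin (subtopology X Q) O2" "O2 \<noteq> {}" "O2 \<subseteq> U1 \<inter> Q"
     "\<forall>W. openin (subtopology X Q) W \<and> W \<noteq> {} \<and> W \<subseteq> O2 \<longrightarrow> W \<inter> A P \<noteq> {}"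
    using baire_meet[OF QB Pc U1Q U1Qne cov] by blast
  have "\<exists>T. openin X T \<and> O2 = T \<inter> Q" using O2(1) by (simp add: openin_subtopology)
  then obtain O0 where O0: "openin X O0" "O2 = O0 \<inter> Q" by blast
  define G where "G = O0 \<inter> U1"
  have "O2 \<subseteq> G" using O0 O2 unfolding G_def by blast
  then have G: "openin X G" "G \<noteq> {}" "G \<subseteq> UX" using O0(1) O2(2) U1(1,3) unfolding G_def
    by (auto intro: openin_Int)
  have meet: "W \<inter> A P \<noteq> {}" if W: "openin X W" "W \<noteq> {}" "W \<subseteq> G" for W
  proof -
    have "W \<inter> Q \<noteq> {}" using dense_meets[OF Qd W(1,2)] by blast
    moreover have "openin (subtopology X Q) (W \<inter> Q)" by (rule openin_subtopology_Int[OF W(1)])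
    moreover have "W \<inter> Q \<subseteq> O2" using W O0 unfolding G_def by blast
    ultimately have "W \<inter> Q \<inter> A P \<noteq> {}" using O2(4) by blast
    then show ?thesis by blast
  qed
  have AP: "A P \<noteq> {}" using meet G by blast
  then have Psub: "P \<subseteq> VV" unfolding A_def by blast
  have Pne: "P \<noteq> {}" and Po: "openin (subtopology Y N) P" using Pb P unfolding pseudobase_def by auto
  have PY: "openin Y P" using pb_open[OF Po Psub VV(1,3)] .
  show ?thesis
  proof (intro exI conjI)
    show "openin X G" "G \<noteq> {}" "G \<subseteq> UX" "openin Y P" "P \<noteq> {}" using G PY Pne by auto
    show "P \<subseteq> VY" using Psub VV_def by blast
    show "\<forall>x\<in>G. \<forall>y\<in>P. dist (f (x, y)) (f (x0, y0)) < e"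
    proof (intro ballI)
      fix x y assume x: "x \<in> G" and y: "y \<in> P"
      have yY: "y \<in> topspace Y" using y Psub VV V0 by blast
      have xX: "x \<in> topspace X" using x G openin_subset by blast
      have "quasicontinuous_at X (\<lambda>x. f (x, y)) x" using qx yY xX unfolding quasicontinuous_def by blast
      note qq = this
      have "\<exists>V. openin X V \<and> V \<noteq> {} \<and> V \<subseteq> G \<and> (\<forall>x'\<in>V. dist (f (x', y)) (f (x,y)) < e/4)"
        by (rule qc_get[OF qq]) (use G x e in auto)
      then obtain U3 where U3: "openin X U3" "U3 \<noteq> {}" "U3 \<subseteq> G" "\<forall>x'\<in>U3. dist (f (x', y)) (f (x,y)) < e/4"
        by blast
      obtain x' where x': "x' \<in> U3" "x' \<in> A P" using meet[OF U3(1-3)] by blast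
      have "dist (f (x',y)) c < e/2" using x' y unfolding A_def by blast
      moreover have "dist (f (x,y)) (f (x',y)) < e/4" using U3 x' by (metis dist_commute)
      ultimately have "dist (f (x,y)) c < e" using dist_triangle[of "f(x,y)" c "f(x',y)"] e by linarith
      then show "dist (f (x, y)) (f (x0, y0)) < e" by (simp add: c_def)
    qed
  qed
qed

lemma case1:
  fixes f :: "'a \<times> 'b \<Rightarrow> 'c::metric_space"
  assumes baire: "Baire_space X"
    and qy: "\<forall>x\<in>topspace X. quasicontinuous Y (\<lambda>y. f (x, y))"
    and Dx: "\<forall>x\<in>topspace X. \<exists>D. D \<subseteq> topspace Y \<and> Y closure_of D = topspace Y \<and>
               (\<forall>y\<in>D. quasicontinuous_at X (\<lambda>x'. f (x', y)) x)"
    and V0: "openin Y V0" "y0 \<in> V0" "V0 \<subseteq> N" "N \<subseteq> topspace Y"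
    and Pc: "countable \<P>" and Pb: "pseudobase (subtopology Y N) \<P>"
    and x0: "x0 \<in> topspace X" and y0: "y0 \<in> topspace Y"
    and UX: "openin X UX" "x0 \<in> UX" and VY: "openin Y VY" "y0 \<in> VY" and e: "e > 0"
  shows "\<exists>G H. openin X G \<and> G \<noteq> {} \<and> G \<subseteq> UX \<and> openin Y H \<and> H \<noteq> {} \<and> H \<subseteq> VY \<and>
        (\<forall>x\<in>G. \<forall>y\<in>H. dist (f (x,y)) (f (x0,y0)) < e)"
proof -
  define c where "c = f (x0,y0)"
  define VV where "VV = VY \<inter> V0"
  have VV: "openin Y VV" "y0 \<in> VV" "VV \<subseteq> N" using VY V0 unfolding VV_def by auto
  have "quasicontinuous_at Y (\<lambda>y. f (x0, y)) y0" using qy y0 x0 unfolding quasicontinuous_def by blast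
  note qq = this
  have "\<exists>V. openin Y V \<and> V \<noteq> {} \<and> V \<subseteq> VV \<and> (\<forall>y\<in>V. dist (f (x0, y)) c < e/4)"
    unfolding c_def by (rule qc_get[OF qq]) (use VV e in auto)
  then obtain V1 where V1: "openin Y V1" "V1 \<noteq> {}" "V1 \<subseteq> VV" "\<forall>y\<in>V1. dist (f (x0, y)) c < e/4"
    by blast
  obtain D0 where D0: "D0 \<subseteq> topspace Y" "Y closure_of D0 = topspace Y"
     "\<forall>y\<in>D0. quasicontinuous_at X (\<lambda>x'. f (x', y)) x0" using Dx x0 by blast
  obtain y1 where y1: "y1 \<in> V1" "y1 \<in> D0" using dense_meets[OF D0(2) V1(1,2)] by blast
  have y1Y: "y1 \<in> topspace Y" using y1 D0 by blast
  have "quasicontinuous_at X (\<lambda>x'. f (x', y1)) x0" using D0 y1 by blast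
  note qq = this
  have "\<exists>V. openin X V \<and> V \<noteq> {} \<and> V \<subseteq> UX \<and> (\<forall>x\<in>V. dist (f (x, y1)) (f (x0,y1)) < e/4)"
    by (rule qc_get[OF qq]) (use UX e in auto)
  then obtain U1 where U1: "openin X U1" "U1 \<noteq> {}" "U1 \<subseteq> UX" "\<forall>x\<in>U1. dist (f (x, y1)) (f (x0,y1)) < e/4"
    by blast
  define A where "A P = {x \<in> U1. P \<subseteq> V1 \<and> (\<forall>y\<in>P. dist (f (x,y)) c < 3*e/4)}" for P
  have cov: "U1 \<subseteq> (\<Union>P\<in>\<P>. A P)"
  proof
    fix x assume x: "x \<in> U1"
    have xX: "x \<in> topspace X" using x U1 openin_subset by blast
    have "quasicontinuous_at Y (\<lambda>y'. f (x, y')) y1" using qy xX y1Y unfolding quasicontinuous_def by blast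
    note qq = this
    have "\<exists>V. openin Y V \<and> V \<noteq> {} \<and> V \<subseteq> V1 \<and> (\<forall>y\<in>V. dist (f (x, y)) (f (x,y1)) < e/8)"
      by (rule qc_get[OF qq]) (use V1 y1 e in auto)
    then obtain V' where V': "openin Y V'" "V' \<noteq> {}" "V' \<subseteq> V1" "\<forall>y\<in>V'. dist (f (x, y)) (f (x,y1)) < e/8"
      by blast
    have "openin (subtopology Y N) V'" using pb_sub[OF V'(1)] V' V1 VV by blast
    then obtain P where P: "P \<in> \<P>" "P \<subseteq> V'" using Pb V' unfolding pseudobase_def by blast
    have "\<forall>y\<in>P. dist (f (x,y)) c < 3*e/4"
    proof
      fix y assume "y \<in> P"
      then have "dist (f (x,y)) (f (x,y1)) < e/8" using P V' by blast
      moreover have "dist (f (x,y1)) (f (x0,y1)) < e/4" using U1 x by blast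
      moreover have "dist (f (x0,y1)) c < e/4" using V1 y1 by blast
      ultimately show "dist (f (x,y)) c < 3*e/4"
        using dist_triangle[of "f(x,y)" c "f(x,y1)"] dist_triangle[of "f(x,y1)" c "f(x0,y1)"] e
        by linarith
    qed
    then show "x \<in> (\<Union>P\<in>\<P>. A P)" using P V' x unfolding A_def by blast
  qed
  obtain P G where P: "P \<in> \<P>" and G: "openin X G" "G \<noteq> {}" "G \<subseteq> U1"
     and meet: "\<forall>W. openin X W \<and> W \<noteq> {} \<and> W \<subseteq> G \<longrightarrow> W \<inter> A P \<noteq> {}"
    using baire_meet[OF baire Pc U1(1,2) cov] by blast
  have AP: "A P \<noteq> {}" using meet G by blast
  then have Psub: "P \<subseteq> V1" unfolding A_def by blast
  have Pne: "P \<noteq> {}" and Po: "openin (subtopology Y N) P" using Pb P unfolding pseudobase_def by auto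
  have PY: "openin Y P" using pb_open[OF Po] Psub V1 VV by blast
  show ?thesis
  proof (intro exI conjI)
    show "openin X G" "G \<noteq> {}" "G \<subseteq> UX" "openin Y P" "P \<noteq> {}" using G U1 PY Pne by auto
    show "P \<subseteq> VY" using Psub V1 VV_def by blast
    show "\<forall>x\<in>G. \<forall>y\<in>P. dist (f (x, y)) (f (x0, y0)) < e"
    proof (intro ballI)
      fix x y assume x: "x \<in> G" and y: "y \<in> P"
      have yY: "y \<in> topspace Y" using y PY openin_subset by blast
      have xX: "x \<in> topspace X" using x G openin_subset by blast
      have "quasicontinuous_at Y (\<lambda>y. f (x, y)) y" using qy yY xX unfolding quasicontinuous_def by blast
      note qq = this
      have "\<exists>V. openin Y V \<and> V \<noteq> {} \<and> V \<subseteq> P \<and> (\<forall>y'\<in>V. dist (f (x, y')) (f (x,y)) < e/16)"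
        by (rule qc_get[OF qq]) (use PY y e in auto)
      then obtain V3 where V3: "openin Y V3" "V3 \<noteq> {}" "V3 \<subseteq> P" "\<forall>y'\<in>V3. dist (f (x, y')) (f (x,y)) < e/16"
        by blast
      obtain Dx' where Dx': "Dx' \<subseteq> topspace Y" "Y closure_of Dx' = topspace Y"
        "\<forall>y\<in>Dx'. quasicontinuous_at X (\<lambda>x'. f (x', y)) x" using Dx xX by blast
      obtain y' where y': "y' \<in> V3" "y' \<in> Dx'" using dense_meets[OF Dx'(2) V3(1,2)] by blast
      have "quasicontinuous_at X (\<lambda>x'. f (x', y')) x" using Dx' y' by blast
      note qq = this
      have "\<exists>V. openin X V \<and> V \<noteq> {} \<and> V \<subseteq> G \<and> (\<forall>x'\<in>V. dist (f (x', y')) (f (x,y')) < e/16)"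
        by (rule qc_get[OF qq]) (use G x e in auto)
      then obtain U3 where U3: "openin X U3" "U3 \<noteq> {}" "U3 \<subseteq> G" "\<forall>x'\<in>U3. dist (f (x', y')) (f (x,y')) < e/16"
        by blast
      obtain x' where x': "x' \<in> U3" "x' \<in> A P" using meet U3(1-3) by blast
      have "y' \<in> P" using y' V3 by blast
      then have "dist (f (x',y')) c < 3*e/4" using x' unfolding A_def by blast
      moreover have "dist (f (x,y')) (f (x',y')) < e/16" using U3 x' by (metis dist_commute)
      moreover have "dist (f (x,y)) (f (x,y')) < e/16" using V3 y' by (metis dist_commute)
      ultimately have "dist (f (x,y)) c < e"
        using dist_triangle[of "f(x,y)" c "f(x,y')"] dist_triangle[of "f(x,y')" c "f(x',y')"] e by linarith
      then show "dist (f (x, y)) (f (x0, y0)) < e" by (simp add: c_def)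
    qed
  qed
qed



theorem theorem4p3:
  fixes X :: "'a topology" and Y :: "'b topology"
    and f :: "'a \<times> 'b \<Rightarrow> 'c::metric_space"
  assumes baire: "Baire_space X"
    and pb: "\<forall>y\<in>topspace Y. \<exists>N. (\<exists>V. openin Y V \<and> y \<in> V \<and> V \<subseteq> N) \<and> N \<subseteq> topspace Y \<and>
               (\<exists>\<P>. countable \<P> \<and> pseudobase (subtopology Y N) \<P>)"
    and cases:
      "(\<forall>x\<in>topspace X. quasicontinuous Y (\<lambda>y. f (x, y)) \<and>
          (\<exists>D. D \<subseteq> topspace Y \<and> Y closure_of D = topspace Y \<and>
               (\<forall>y\<in>D. quasicontinuous_at X (\<lambda>x'. f (x', y)) x)))
       \<or>
       (\<forall>y\<in>topspace Y. quasicontinuous X (\<lambda>x. f (x, y)) \<and>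
          (\<exists>Q. Q \<subseteq> topspace X \<and> X closure_of Q = topspace X \<and> Baire_space (subtopology X Q) \<and>
               (\<forall>x\<in>Q. quasicontinuous_at Y (\<lambda>y'. f (x, y')) y)))"
  shows "quasicontinuous (prod_topology X Y) f"
  unfolding quasicontinuous_def
proof
  fix t assume "t \<in> topspace (prod_topology X Y)"
  then have tt: "t \<in> topspace X \<times> topspace Y" by simp
  define x0 where "x0 = fst t"
  define y0 where "y0 = snd t"
  have t: "t = (x0,y0)" and x0: "x0 \<in> topspace X" and y0: "y0 \<in> topspace Y"
    using tt unfolding x0_def y0_def by auto
  have "\<exists>N. (\<exists>V. openin Y V \<and> y0 \<in> V \<and> V \<subseteq> N) \<and> N \<subseteq> topspace Y \<and>
               (\<exists>\<P>. countable \<P> \<and> pseudobase (subtopology Y N) \<P>)" using pb y0 by (rule bspec)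
  then obtain N V0 \<P> where V0: "openin Y V0" "y0 \<in> V0" "V0 \<subseteq> N" "N \<subseteq> topspace Y"
    and Pc: "countable \<P>" and Pb: "pseudobase (subtopology Y N) \<P>" by blast
  show "quasicontinuous_at (prod_topology X Y) f t"
    unfolding t
  proof (rule qc_box)
    fix UX VY and e :: real
    assume UX: "openin X UX" and VY: "openin Y VY" and xu: "x0 \<in> UX" and yv: "y0 \<in> VY" and e: "e > 0"
    from cases show "\<exists>G H. openin X G \<and> G \<noteq> {} \<and> G \<subseteq> UX \<and> openin Y H \<and> H \<noteq> {} \<and> H \<subseteq> VY \<and>
        (\<forall>x\<in>G. \<forall>y\<in>H. dist (f (x,y)) (f (x0,y0)) < e)"
    proof
      assume c1: "\<forall>x\<in>topspace X. quasicontinuous Y (\<lambda>y. f (x, y)) \<and>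
          (\<exists>D. D \<subseteq> topspace Y \<and> Y closure_of D = topspace Y \<and>
               (\<forall>y\<in>D. quasicontinuous_at X (\<lambda>x'. f (x', y)) x))"
      have q1: "\<forall>x\<in>topspace X. quasicontinuous Y (\<lambda>y. f (x, y))" using c1 by blast
      have q2: "\<forall>x\<in>topspace X. \<exists>D. D \<subseteq> topspace Y \<and> Y closure_of D = topspace Y \<and>
               (\<forall>y\<in>D. quasicontinuous_at X (\<lambda>x'. f (x', y)) x)" using c1 by blast
      show ?thesis by (rule case1[OF baire q1 q2 V0 Pc Pb x0 y0 UX xu VY yv e])
    next
      assume c2: "\<forall>y\<in>topspace Y. quasicontinuous X (\<lambda>x. f (x, y)) \<and>
          (\<exists>Q. Q \<subseteq> topspace X \<and> X closure_of Q = topspace X \<and> Baire_space (subtopology X Q) \<and>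
               (\<forall>x\<in>Q. quasicontinuous_at Y (\<lambda>y'. f (x, y')) y))"
      then obtain Q where Q: "Q \<subseteq> topspace X" "X closure_of Q = topspace X" "Baire_space (subtopology X Q)"
          "\<forall>x\<in>Q. quasicontinuous_at Y (\<lambda>y'. f (x, y')) y0" using y0 by blast
      have q1: "\<forall>y\<in>topspace Y. quasicontinuous X (\<lambda>x. f (x, y))" using c2 by blast
      show ?thesis by (rule case2[OF q1 Q V0 Pc Pb x0 y0 UX xu VY yv e])
    qed
  qed
qed

end
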